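(* Let $M$ be a topological space and $E:\mathbb{R}\to\mathcal{T}(M)$ a spectral family in the lattice $\mathcal{T}(M)$ of open subsets of $M$, with admissible domain $\mathcal{D}(E)$ and induced function $f_E:\mathcal{D}(E)\to\mathbb{R}$. Then $\mathrm{sp}(E)=\overline{\mathrm{im}\, f_E}$.
   Context: In $\mathcal{T}(M)$, $\bigvee_\alpha U_\alpha=\bigcup_\alpha U_\alpha$ and $\bigwedge_\alpha U_\alpha=\mathrm{int}\bigcap_\alpha U_\alpha$. A spectral family in $\mathcal{T}(M)$ is a map $E:\mathbb{R}\to\mathcal{T}(M)$ with $E_\lambda\subseteq E_\mu$ for $\lambda\le\mu$, $E_\lambda=\bigwedge_{\mu>\lambda}E_\mu$, $\bigwedge_\lambda E_\lambda=\emptyset$, $\bigcup_\lambda E_\lambda=M$. Its admissible domain is $\mathcal{D}(E)=\{x\in M\mid\exists\lambda: x\notin E_\lambda\}$, and the induced function is $f_E(x)=\inf\{\lambda\in\mathbb{R}\mid x\in E_\lambda\}$ for $x\in\mathcal{D}(E)$. The resolvent set $R(E)$ is the set of $\lambda\in\mathbb{R}$ such that $E$ is constant on a neighbourhood of $\lambda$, and $\mathrm{sp}(E)=\mathbb{R}\setminus R(E)$. *)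

theory Defs
  imports "HOL-Analysis.Analysis"
begin

text \<open>Spectral family in the lattice of open subsets of a topological space X
  (carrier topspace X). Meet of a family of open sets = interior of the intersection.\<close>

definition spectral_family :: "'a topology \<Rightarrow> (real \<Rightarrow> 'a set) \<Rightarrow> bool" where
  "spectral_family X E \<longleftrightarrow>
     (\<forall>l. openin X (E l)) \<and>
     (\<forall>l m. l \<le> m \<longrightarrow> E l \<subseteq> E m) \<and>
     (\<forall>l. E l = X interior_of (\<Inter>m\<in>{l<..}. E m)) \<and>
     X interior_of (\<Inter>l. E l) = {} \<and>
     (\<Union>l. E l) = topspace X"

definition admissible_domain :: "'a topology \<Rightarrow> (real \<Rightarrow> 'a set) \<Rightarrow> 'a set" where
  "admissible_domain X E = {x \<in> topspace X. \<exists>l. x \<notin> E l}"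

definition induced_function :: "(real \<Rightarrow> 'a set) \<Rightarrow> 'a \<Rightarrow> real" where
  "induced_function E x = Inf {l. x \<in> E l}"

definition resolvent_set :: "(real \<Rightarrow> 'a set) \<Rightarrow> real set" where
  "resolvent_set E = {l. \<exists>U. open U \<and> l \<in> U \<and> (\<forall>m\<in>U. \<forall>n\<in>U. E m = E n)}"

definition spectrum_sf :: "(real \<Rightarrow> 'a set) \<Rightarrow> real set" where
  "spectrum_sf E = UNIV - resolvent_set E"

end

theory Submission
  imports Defs
begin

lemma resolvent_open: "open (resolvent_set E)"
  unfolding open_subopen[of "resolvent_set E"]
proof
  fix l assume "l \<in> resolvent_set E"
  then obtain U where U: "open U" "l \<in> U" "\<forall>m\<in>U. \<forall>n\<in>U. E m = E n"
    unfolding resolvent_set_def by blast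
  then have "U \<subseteq> resolvent_set E" unfolding resolvent_set_def by blast
  with U show "\<exists>T. open T \<and> l \<in> T \<and> T \<subseteq> resolvent_set E" by blast
qed

theorem proposition2p30:
  fixes X :: "'a topology" and E :: "real \<Rightarrow> 'a set"
  assumes "spectral_family X E"
  shows "spectrum_sf E = closure (induced_function E ` admissible_domain X E)"
proof -
  have op: "\<And>l. openin X (E l)" and mono: "\<And>l m. l \<le> m \<Longrightarrow> E l \<subseteq> E m"
    and un: "(\<Union>l. E l) = topspace X"
  proof -
    note sf = assms[unfolded spectral_family_def]
    show "\<And>l. openin X (E l)" using sf[THEN conjunct1] by blast
    show "\<And>l m. l \<le> m \<Longrightarrow> E l \<subseteq> E m" using sf[THEN conjunct2, THEN conjunct1] by blast
    show "(\<Union>l. E l) = topspace X"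
      using sf[THEN conjunct2, THEN conjunct2, THEN conjunct2, THEN conjunct2] by blast
  qed
  have sub: "\<And>l. E l \<subseteq> topspace X" using op openin_subset by blast
  let ?f = "induced_function E" and ?D = "admissible_domain X E"
  have imsp: "?f ` ?D \<subseteq> spectrum_sf E"
  proof
    fix y assume "y \<in> ?f ` ?D"
    then obtain x where x: "x \<in> topspace X" "\<exists>l. x \<notin> E l" and y: "y = Inf {l. x \<in> E l}"
      unfolding admissible_domain_def induced_function_def by auto
    obtain l0 where l0: "x \<notin> E l0" using x by blast
    have ne: "{l. x \<in> E l} \<noteq> {}" using x un by auto
    have bdd: "bdd_below {l. x \<in> E l}"
    proof (rule bdd_belowI)
      fix l assume "l \<in> {l. x \<in> E l}"
      then have xl: "x \<in> E l" by simp
      show "l0 \<le> l"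
      proof (rule ccontr)
        assume "\<not> l0 \<le> l"
        then have "E l \<subseteq> E l0" using mono by simp
        then show False using xl l0 by blast
      qed
    qed
    have below: "x \<notin> E m" if "m < y" for m
    proof
      assume "x \<in> E m"
      then have "y \<le> m" using cInf_lower[OF _ bdd, of m] y by simp
      then show False using that by simp
    qed
    have above: "x \<in> E m" if mgt: "m > y" for m
    proof -
      obtain l where "x \<in> E l" "l < m" using cInf_less_iff[OF ne bdd] mgt y by auto
      then show ?thesis using mono[of l m] by auto
    qed
    show "y \<in> spectrum_sf E"
    proof (rule ccontr)
      assume "y \<notin> spectrum_sf E"
      then obtain U where U: "open U" "y \<in> U" "\<forall>m\<in>U. \<forall>n\<in>U. E m = E n"
        unfolding spectrum_sf_def resolvent_set_def by blast
      then obtain e where e: "e > 0" "ball y e \<subseteq> U" using open_contains_ball by blast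
      have "y - e/2 \<in> U" "y + e/2 \<in> U" using e by (auto simp: dist_real_def subset_iff)
      then have "E (y - e/2) = E (y + e/2)" using U by blast
      moreover have "x \<notin> E (y - e/2)" "x \<in> E (y + e/2)" using below above e by auto
      ultimately show False by simp
    qed
  qed
  have cl: "closed (spectrum_sf E)"
    unfolding spectrum_sf_def using resolvent_open[of E] by (simp add: closed_Diff)
  have "closure (?f ` ?D) \<subseteq> spectrum_sf E"
    using imsp cl closure_minimal by blast
  moreover have "spectrum_sf E \<subseteq> closure (?f ` ?D)"
  proof
    fix y assume ysp: "y \<in> spectrum_sf E"
    show "y \<in> closure (?f ` ?D)"
    proof (rule ccontr)
      assume "y \<notin> closure (?f ` ?D)"
      then obtain e where e: "e > 0" "ball y e \<inter> ?f ` ?D = {}"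
      proof -
        have "open (- closure (?f ` ?D))" by (rule open_Compl) (rule closed_closure)
        then obtain e where "e > 0" "ball y e \<subseteq> - closure (?f ` ?D)"
          using \<open>y \<notin> closure (?f ` ?D)\<close> open_contains_ball by blast
        moreover have "?f ` ?D \<subseteq> closure (?f ` ?D)" by (rule closure_subset)
        ultimately have "ball y e \<inter> ?f ` ?D = {}" by (auto simp del: mem_ball)
        then show ?thesis using that \<open>e > 0\<close> by simp
      qed
      have "\<forall>m\<in>ball y e. \<forall>n\<in>ball y e. E m = E n"
      proof (intro ballI)
        have key: "E m = E n" if m: "m \<in> ball y e" and n: "n \<in> ball y e" and mn: "m \<le> n" for m n
        proof (rule ccontr)
          assume "E m \<noteq> E n"
          then have "\<not> E n \<subseteq> E m" using mono[OF mn] by (simp add: subset_antisym)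
          then obtain x where xn: "x \<in> E n" and xm: "x \<notin> E m" by (auto simp: subset_iff)
          have xD: "x \<in> ?D" using xn xm sub unfolding admissible_domain_def by blast
          have bdd: "bdd_below {l. x \<in> E l}"
          proof (rule bdd_belowI)
            fix l assume "l \<in> {l. x \<in> E l}"
            then have xl: "x \<in> E l" by simp
            show "m \<le> l"
            proof (rule ccontr)
              assume "\<not> m \<le> l"
              then have "E l \<subseteq> E m" using mono by simp
              then show False using xl xm by blast
            qed
          qed
          have ge: "m \<le> ?f x" unfolding induced_function_def
          proof (rule cInf_greatest)
            show "{l. x \<in> E l} \<noteq> {}" using xn by blast
            fix l assume "l \<in> {l. x \<in> E l}"
            then have xl: "x \<in> E l" by simp
            show "m \<le> l"
            proof (rule ccontr)
              assume "\<not> m \<le> l"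
              then have "E l \<subseteq> E m" using mono by simp
              then show False using xl xm by blast
            qed
          qed
          have le: "?f x \<le> n" unfolding induced_function_def
            using cInf_lower[OF _ bdd, of n] xn by blast
          have "?f x \<in> ball y e" using m n ge le
            unfolding mem_ball dist_real_def by linarith
          then show False using e xD by blast
        qed
        fix m n assume "m \<in> ball y e" "n \<in> ball y e"
        then show "E m = E n"
        proof (cases "m \<le> n")
          case True then show ?thesis using key[of m n] \<open>m \<in> ball y e\<close> \<open>n \<in> ball y e\<close> by blast
        next
          case False then have "n \<le> m" by simp
          then show ?thesis using key[of n m] \<open>m \<in> ball y e\<close> \<open>n \<in> ball y e\<close> by simp
        qed
      qed
      moreover have "open (ball y e)" by simp
      moreover have "y \<in> ball y e" using e(1) by simp
      ultimately have "y \<in> resolvent_set E" unfolding resolvent_set_def by blast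
      then show False using ysp unfolding spectrum_sf_def by blast
    qed
  qed
  ultimately show ?thesis by blast
qed

end
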